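(* Let $R$ be a finite transitive permutation group of degree $n$. Then $R$ has at most \[ 7.3722 \cdot n^{\frac{\log_2 n}{4} + 1.8919} \] systems of imprimitivity. *)

theory Defs
  imports Complex_Main "HOL-Algebra.Bij" "HOL-Library.Disjoint_Sets"
begin

definition transitive_perm_group :: "'a set \<Rightarrow> ('a \<Rightarrow> 'a) set \<Rightarrow> bool" where
  "transitive_perm_group \<Omega> R \<longleftrightarrow>
     subgroup R (BijGroup \<Omega>) \<and> (\<forall>x\<in>\<Omega>. \<forall>y\<in>\<Omega>. \<exists>g\<in>R. g x = y)"

definition systems_of_imprimitivity :: "'a set \<Rightarrow> ('a \<Rightarrow> 'a) set \<Rightarrow> 'a set set set" where
  "systems_of_imprimitivity \<Omega> R =
     {P. partition_on \<Omega> P \<and> (\<forall>g\<in>R. \<forall>B\<in>P. g ` B \<in> P)}"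

end

theory Submission imports Defs begin

definition blk :: "'a set \<Rightarrow> ('a \<Rightarrow> 'a) set \<Rightarrow> 'a \<Rightarrow> 'a set \<Rightarrow> bool" where
  "blk \<Omega> R x C \<longleftrightarrow> C \<subseteq> \<Omega> \<and> x \<in> C \<and> (\<forall>g\<in>R. g ` C = C \<or> g ` C \<inter> C = {})"

definition clos :: "'a set \<Rightarrow> ('a \<Rightarrow> 'a) set \<Rightarrow> 'a \<Rightarrow> 'a set \<Rightarrow> 'a set" where
  "clos \<Omega> R x S = \<Inter>{B. blk \<Omega> R x B \<and> S \<subseteq> B}"

definition Nb :: "'a set \<Rightarrow> ('a \<Rightarrow> 'a) set \<Rightarrow> 'a \<Rightarrow> nat \<Rightarrow> 'a set \<Rightarrow> nat" where
  "Nb \<Omega> R x b C = card {B. blk \<Omega> R x B \<and> card B = b \<and> C \<subseteq> B}"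

lemma R_bij:
  assumes "transitive_perm_group \<Omega> R" "g \<in> R"
  shows "bij_betw g \<Omega> \<Omega>"
proof -
  have "R \<subseteq> carrier (BijGroup \<Omega>)" using assms(1) unfolding transitive_perm_group_def
    by (simp add: subgroup.subset)
  then show ?thesis using assms(2) by (auto simp: BijGroup_def Bij_def)
qed

lemma blk_Omega:
  assumes "transitive_perm_group \<Omega> R" "x \<in> \<Omega>"
  shows "blk \<Omega> R x \<Omega>"
  using R_bij[OF assms(1)] assms(2) unfolding blk_def by (auto simp: bij_betw_def)

lemma blk_Inter:
  assumes tr: "transitive_perm_group \<Omega> R" and F: "F \<noteq> {}" "\<forall>B\<in>F. blk \<Omega> R x B"
  shows "blk \<Omega> R x (\<Inter>F)"
  unfolding blk_def
proof (intro conjI ballI)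
  show "\<Inter>F \<subseteq> \<Omega>" using F unfolding blk_def by blast
  show "x \<in> \<Inter>F" using F unfolding blk_def by blast
  fix g assume g: "g \<in> R"
  have bij: "bij_betw g \<Omega> \<Omega>" using R_bij[OF tr g] .
  have inj: "inj_on g \<Omega>" using bij bij_betw_def by blast
  show "g ` \<Inter>F = \<Inter>F \<or> g ` \<Inter>F \<inter> \<Inter>F = {}"
  proof (cases "g ` \<Inter>F \<inter> \<Inter>F = {}")
    case False
    then obtain y where y: "y \<in> \<Inter>F" "g y \<in> \<Inter>F" by blast
    have eq: "g ` B = B" if "B \<in> F" for B
    proof -
      have "g y \<in> g ` B \<inter> B" using y that by blast
      then show ?thesis using F(2) that g unfolding blk_def by blast
    qed
    have "g ` \<Inter>F = \<Inter>F"
    proof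
      show "g ` \<Inter>F \<subseteq> \<Inter>F" using eq by blast
      show "\<Inter>F \<subseteq> g ` \<Inter>F"
      proof
        fix w assume w: "w \<in> \<Inter>F"
        obtain B0 where B0: "B0 \<in> F" using F(1) by blast
        have "w \<in> g ` B0" using eq[OF B0] w B0 by blast
        then obtain z where z: "z \<in> B0" "g z = w" by blast
        have zO: "z \<in> \<Omega>" using z B0 F(2) unfolding blk_def by blast
        have "z \<in> B" if "B \<in> F" for B
        proof -
          have "w \<in> g ` B" using eq[OF that] w that by blast
          then obtain z' where z': "z' \<in> B" "g z' = w" by blast
          have "z' \<in> \<Omega>" using z' that F(2) unfolding blk_def by blast
          then have "z' = z" using inj_onD[OF inj _ \<open>z' \<in> \<Omega>\<close> zO] z z' by simp
          then show ?thesis using z' by simp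
        qed
        then show "w \<in> g ` \<Inter>F" using z by blast
      qed
    qed
    then show ?thesis by simp
  qed simp
qed

lemma clos_props:
  assumes tr: "transitive_perm_group \<Omega> R" and x: "x \<in> \<Omega>" and S: "S \<subseteq> \<Omega>"
  shows "blk \<Omega> R x (clos \<Omega> R x S)" "S \<subseteq> clos \<Omega> R x S"
    "\<And>B. blk \<Omega> R x B \<Longrightarrow> S \<subseteq> B \<Longrightarrow> clos \<Omega> R x S \<subseteq> B"
proof -
  have ne: "{B. blk \<Omega> R x B \<and> S \<subseteq> B} \<noteq> {}" using blk_Omega[OF tr x] S by blast
  show "blk \<Omega> R x (clos \<Omega> R x S)" unfolding clos_def
    by (rule blk_Inter[OF tr ne]) simp
  show "S \<subseteq> clos \<Omega> R x S" unfolding clos_def by blast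
  show "\<And>B. blk \<Omega> R x B \<Longrightarrow> S \<subseteq> B \<Longrightarrow> clos \<Omega> R x S \<subseteq> B" unfolding clos_def by blast
qed

lemma blk_double:
  assumes tr: "transitive_perm_group \<Omega> R" and fin: "finite \<Omega>"
    and C: "blk \<Omega> R x C" and B: "blk \<Omega> R x B" and sub: "C \<subset> B"
  shows "2 * card C \<le> card B"
proof -
  obtain y where y: "y \<in> B" "y \<notin> C" using sub by blast
  have xO: "x \<in> \<Omega>" "y \<in> \<Omega>" using B y unfolding blk_def by auto
  obtain g where g: "g \<in> R" "g x = y" using tr xO unfolding transitive_perm_group_def by blast
  have bij: "bij_betw g \<Omega> \<Omega>" using R_bij[OF tr g(1)] .
  have "y \<in> g ` B \<inter> B" using g y B unfolding blk_def by auto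
  then have gB: "g ` B = B" using B g unfolding blk_def by blast
  have "g ` C \<subseteq> B" using gB sub by blast
  moreover have "y \<in> g ` C" using g C unfolding blk_def by auto
  then have "g ` C \<noteq> C" using y by blast
  then have disj: "g ` C \<inter> C = {}" using C g unfolding blk_def by blast
  have COm: "C \<subseteq> \<Omega>" using C unfolding blk_def by blast
  have cg: "card (g ` C) = card C"
    using bij COm by (meson bij_betw_def card_image inj_on_subset)
  have finB: "finite B" using B fin unfolding blk_def using finite_subset by blast
  have "C \<union> g ` C \<subseteq> B" using sub calculation by blast
  then have "card (C \<union> g ` C) \<le> card B" using finB card_mono by blast
  moreover have "card (C \<union> g ` C) = card C + card (g ` C)"
  proof -
    have "finite C" using finB sub finite_subset by blast
    moreover have "finite (g ` C)" using finB \<open>g ` C \<subseteq> B\<close> finite_subset by blast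
    ultimately show ?thesis using disj card_Un_disjoint by (metis inf_commute)
  qed
  ultimately show ?thesis using cg by simp
qed

lemma finite_blks:
  assumes "finite \<Omega>"
  shows "finite {B. blk \<Omega> R x B \<and> P B}"
proof (rule finite_subset[of _ "Pow \<Omega>"])
  show "{B. blk \<Omega> R x B \<and> P B} \<subseteq> Pow \<Omega>" unfolding blk_def by blast
qed (simp add: assms)

lemma count_step:
  assumes tr: "transitive_perm_group \<Omega> R" and fin: "finite \<Omega>" and x: "x \<in> \<Omega>"
    and b1: "1 \<le> b" and bn: "b \<le> card \<Omega>"
  shows "blk \<Omega> R x C \<Longrightarrow> card C \<le> b \<Longrightarrow>
    real (Nb \<Omega> R x b C) \<le> (2 * real (card \<Omega>) / real b) powr (log 2 (real b / real (card C)))"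
proof (induction "b - card C" arbitrary: C rule: less_induct)
  case less
  define n where "n = card \<Omega>"
  define L where "L = log 2 (real b / real (card C))"
  define S where "S = {B. blk \<Omega> R x B \<and> card B = b \<and> C \<subseteq> B}"
  have NS: "Nb \<Omega> R x b C = card S" unfolding S_def Nb_def by simp
  have finS: "finite S" unfolding S_def blk_def
    by (rule finite_subset[of _ "Pow \<Omega>"]) (use fin in auto)
  have COm: "C \<subseteq> \<Omega>" and xC: "x \<in> C" using less.prems unfolding blk_def by auto
  have finC: "finite C" using COm fin finite_subset by blast
  have "C \<noteq> {}" using xC by blast
  then have cC1: "1 \<le> card C" using finC by (simp add: Suc_leI card_gt_0_iff)
  have base: "2 * real n / real b \<ge> 1" using bn b1 unfolding n_def by (simp add: field_simps)
  show ?case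
  proof (cases "card C = b")
    case True
    have "S \<subseteq> {C}"
    proof
      fix B assume "B \<in> S"
      then have "C \<subseteq> B" "card B = card C" "B \<subseteq> \<Omega>" using True unfolding S_def blk_def
        by auto
      then have "C \<subseteq> B" "card B = card C" "finite B" using fin finite_subset by auto
      then have "C = B" using card_subset_eq[of B C] by simp
      then show "B \<in> {C}" by simp
    qed
    then have "card S \<le> card {C}" by (intro card_mono) auto
    then have "card S \<le> 1" by simp
    moreover have "log 2 (real b / real (card C)) = 0" using True b1 by simp
    ultimately show ?thesis using NS b1 bn by simp
  next
    case False
    then have lt: "card C < b" using less.prems by simp
    show ?thesis
    proof (cases "S = {}")
      case True
      then show ?thesis using NS by simp
    next
      case False
      then obtain B0 where B0: "B0 \<in> S" by blast
      then have "C \<subset> B0" using lt unfolding S_def by auto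
      then have dbl: "2 * card C \<le> b" using blk_double[OF tr fin less.prems(1)] B0 unfolding S_def by auto
      define M where "M = (2 * real n / real b) powr (L - 1)"
      have Mnn: "M \<ge> 0" unfolding M_def by simp
      have trm: "real (card {B\<in>S. s \<in> B}) \<le> M" if s: "s \<in> \<Omega> - C" for s
      proof -
        define D where "D = clos \<Omega> R x (C \<union> {s})"
        have sub: "C \<union> {s} \<subseteq> \<Omega>" using COm s by blast
        note cp = clos_props[OF tr x sub, folded D_def]
        have "C \<subset> D" using cp(2) s by blast
        then have dD: "2 * card C \<le> card D" using blk_double[OF tr fin less.prems(1) cp(1)] by blast
        have subS: "{B\<in>S. s \<in> B} \<subseteq> {B. blk \<Omega> R x B \<and> card B = b \<and> D \<subseteq> B}"
          using cp(3) unfolding S_def by blast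
        show ?thesis
        proof (cases "card D \<le> b")
          case False
          have "{B\<in>S. s \<in> B} = {}"
          proof (rule ccontr)
            assume "{B\<in>S. s \<in> B} \<noteq> {}"
            then obtain B where B: "B \<in> S" "D \<subseteq> B" using subS by blast
            then have "B \<subseteq> \<Omega>" "card B = b" unfolding S_def blk_def by auto
            then have "finite B" "card B = b" using fin finite_subset by auto
            then have "card D \<le> card B" using B(2) card_mono by blast
            then show False using False \<open>card B = b\<close> by simp
          qed
          then show ?thesis using Mnn by (metis card.empty of_nat_0)
        next
          case True
          have "b - card D < b - card C" using dD lt cC1 by linarith
          then have IH: "real (Nb \<Omega> R x b D) \<le> (2 * real n / real b) powr (log 2 (real b / real (card D)))"
            using less.hyps[OF _ cp(1) True] unfolding n_def by blast
          have cD: "real (card D) \<ge> 2 * real (card C)" using dD by linarith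
          have "log 2 (real b / real (card D)) \<le> log 2 (real b / (2 * real (card C)))"
          proof -
            have "real b / real (card D) \<le> real b / (2 * real (card C))"
              using cD cC1 b1 by (intro divide_left_mono) auto
            moreover have "0 < real b / real (card D)" using cD cC1 b1 by simp
            ultimately show ?thesis by simp
          qed
          also have "\<dots> = L - 1" unfolding L_def using cC1 b1
            by (simp add: log_divide log_mult)
          finally have "(2 * real n / real b) powr (log 2 (real b / real (card D))) \<le> M"
            unfolding M_def using base by (intro powr_mono) auto
          moreover have "card {B\<in>S. s \<in> B} \<le> Nb \<Omega> R x b D"
            unfolding Nb_def by (rule card_mono[OF finite_blks[OF fin] subS])
          ultimately show ?thesis using IH by linarith
        qed
      qed
      have cnt: "(\<Sum>B\<in>S. card (B - C)) = (\<Sum>s\<in>\<Omega> - C. card {B\<in>S. s \<in> B})"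
      proof -
        have "(\<Sum>B\<in>S. card (B - C)) = (\<Sum>B\<in>S. \<Sum>s\<in>\<Omega> - C. of_bool (s \<in> B))"
        proof (rule sum.cong[OF refl])
          fix B assume "B \<in> S"
          then have "B \<subseteq> \<Omega>" unfolding S_def blk_def by blast
          then have "(\<Omega> - C) \<inter> {s. s \<in> B} = B - C" by blast
          then show "card (B - C) = (\<Sum>s\<in>\<Omega> - C. of_bool (s \<in> B))" using fin by simp
        qed
        also have "\<dots> = (\<Sum>s\<in>\<Omega> - C. \<Sum>B\<in>S. of_bool (s \<in> B))" by (rule sum.swap)
        also have "\<dots> = (\<Sum>s\<in>\<Omega> - C. card {B\<in>S. s \<in> B})"
        proof (rule sum.cong[OF refl])
          fix s show "(\<Sum>B\<in>S. of_bool (s \<in> B)) = card {B\<in>S. s \<in> B}"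
          proof -
            have e: "S \<inter> {B. s \<in> B} = {B\<in>S. s \<in> B}" by blast
            have "(\<Sum>B\<in>S. of_bool (s \<in> B)) = (of_nat (card (S \<inter> {B. s \<in> B})) :: nat)"
              using sum_of_bool_eq[of S "\<lambda>B. s \<in> B", where 'a=nat] finS by (simp only:)
            then show ?thesis unfolding e of_nat_id .
          qed
        qed
        finally show ?thesis .
      qed
      have lhs: "(\<Sum>B\<in>S. card (B - C)) = card S * (b - card C)"
      proof -
        have "(\<Sum>B\<in>S. card (B - C)) = (\<Sum>B\<in>S. b - card C)"
        proof (rule sum.cong[OF refl])
          fix B assume "B \<in> S"
          then have "C \<subseteq> B" "card B = b" "B \<subseteq> \<Omega>" unfolding S_def blk_def
            by auto
          then have "C \<subseteq> B" "card B = b" "finite B" using fin finite_subset by auto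
          then show "card (B - C) = b - card C" by (simp add: card_Diff_subset finC)
        qed
        then show ?thesis by simp
      qed
      have "real (card S * (b - card C)) = (\<Sum>s\<in>\<Omega> - C. real (card {B\<in>S. s \<in> B}))"
        using cnt lhs by (metis of_nat_sum)
      also have "\<dots> \<le> (\<Sum>s\<in>\<Omega> - C. M)" by (rule sum_mono) (rule trm)
      also have "\<dots> \<le> real n * M"
      proof -
        have "card (\<Omega> - C) \<le> n" unfolding n_def by (simp add: card_mono fin)
        then show ?thesis using Mnn by (simp add: mult_right_mono)
      qed
      finally have A: "real (card S) * (real b - real (card C)) \<le> real n * M"
        using lt by (simp add: of_nat_diff)
      have hb: "real b - real (card C) \<ge> real b / 2" using dbl by linarith
      have "real (card S) * (real b / 2) \<le> real (card S) * (real b - real (card C))"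
        by (rule mult_left_mono[OF hb]) simp
      with A have "real (card S) * (real b / 2) \<le> real n * M" by linarith
      then have "real (card S) \<le> (2 * real n / real b) * M" using b1
        by (simp add: field_simps)
      also have "\<dots> = (2 * real n / real b) powr L"
        unfolding M_def using base by (simp add: powr_diff)
      finally show ?thesis using NS unfolding L_def n_def by simp
    qed
  qed
qed


lemma real_bound:
  fixes n b :: real
  assumes "1 \<le> b" "b \<le> n"
  shows "(2 * n / b) powr (log 2 b) \<le> 2 powr ((log 2 n + 1)^2 / 4)"
proof -
  define k where "k = log 2 n"
  define j where "j = log 2 b"
  have "2 * n / b = 2 powr (1 + k - j)"
    using assms unfolding k_def j_def by (simp add: powr_diff powr_add)
  then have "(2 * n / b) powr (log 2 b) = 2 powr ((1 + k - j) * j)"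
    unfolding j_def by (simp add: powr_powr)
  also have "\<dots> \<le> 2 powr ((k + 1)^2 / 4)"
  proof (rule powr_mono)
    have "0 \<le> (k + 1 - 2 * j)^2" by simp
    then show "(1 + k - j) * j \<le> (k + 1)^2 / 4" by (simp add: power2_eq_square algebra_simps)
  qed simp
  finally show ?thesis unfolding k_def .
qed

lemma systems_subset:
  assumes tr: "transitive_perm_group \<Omega> R" and x: "x \<in> \<Omega>"
  shows "systems_of_imprimitivity \<Omega> R \<subseteq> (\<lambda>B. (\<lambda>g. g ` B) ` R) ` {B. blk \<Omega> R x B}"
proof
  fix P assume "P \<in> systems_of_imprimitivity \<Omega> R"
  then have part: "partition_on \<Omega> P" and inv: "\<forall>g\<in>R. \<forall>B\<in>P. g ` B \<in> P"
    unfolding systems_of_imprimitivity_def by auto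
  have U: "\<Union>P = \<Omega>" and dj: "disjoint P" and ne: "{} \<notin> P" using part unfolding partition_on_def by auto
  obtain B where B: "B \<in> P" "x \<in> B" using U x by blast
  have dis: "C = D \<or> C \<inter> D = {}" if "C \<in> P" "D \<in> P" for C D
    using dj that unfolding disjoint_def by blast
  have "blk \<Omega> R x B" unfolding blk_def using B U inv dis by blast
  moreover have "P = (\<lambda>g. g ` B) ` R"
  proof
    show "(\<lambda>g. g ` B) ` R \<subseteq> P" using inv B by blast
    show "P \<subseteq> (\<lambda>g. g ` B) ` R"
    proof
      fix C assume C: "C \<in> P"
      then obtain y where y: "y \<in> C" using ne by (metis all_not_in_conv)
      then have "y \<in> \<Omega>" using U C by blast
      then obtain g where g: "g \<in> R" "g x = y" using tr x unfolding transitive_perm_group_def by blast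
      have "g ` B \<in> P" using inv g B by blast
      moreover have "y \<in> g ` B" using g B by blast
      ultimately have "g ` B = C" using dis[OF _ C] y by blast
      then show "C \<in> (\<lambda>g. g ` B) ` R" using g by blast
    qed
  qed
  ultimately show "P \<in> (\<lambda>B. (\<lambda>g. g ` B) ` R) ` {B. blk \<Omega> R x B}" by blast
qed

theorem corollary1p2:
  fixes \<Omega> :: "'a set" and R :: "('a \<Rightarrow> 'a) set" and n :: nat
  assumes "finite \<Omega>" and "\<Omega> \<noteq> {}" and "n = card \<Omega>"
    and "transitive_perm_group \<Omega> R"
  shows "real (card (systems_of_imprimitivity \<Omega> R))
           \<le> 7.3722 * real n powr (log 2 (real n) / 4 + 1.8919)"
proof -
  note fin = assms(1) and tr = assms(4)
  obtain x where x: "x \<in> \<Omega>" using assms(2) by blast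
  have n1: "1 \<le> n" using assms(1,2,3) by (simp add: Suc_leI card_gt_0_iff)
  define Bl where "Bl = {B. blk \<Omega> R x B}"
  have finBl: "finite Bl" unfolding Bl_def blk_def
    by (rule finite_subset[of _ "Pow \<Omega>"]) (use fin in auto)
  have "card (systems_of_imprimitivity \<Omega> R) \<le> card ((\<lambda>B. (\<lambda>g. g ` B) ` R) ` Bl)"
    using systems_subset[OF tr x] finBl unfolding Bl_def by (intro card_mono) auto
  also have "\<dots> \<le> card Bl" using finBl card_image_le by blast
  also have "Bl = (\<Union>b\<in>{1..n}. {B. blk \<Omega> R x B \<and> card B = b \<and> {x} \<subseteq> B})"
  proof -
    have "1 \<le> card B \<and> card B \<le> n" if "blk \<Omega> R x B" for B
    proof -
      have "B \<subseteq> \<Omega>" "x \<in> B" using that unfolding blk_def by auto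
      moreover then have "finite B" using fin finite_subset by blast
      ultimately show ?thesis using assms(3) fin card_mono
        by (metis One_nat_def Suc_leI card_gt_0_iff empty_iff)
    qed
    then show ?thesis unfolding Bl_def blk_def by auto
  qed
  also have "card \<dots> \<le> (\<Sum>b\<in>{1..n}. Nb \<Omega> R x b {x})"
    unfolding Nb_def by (rule card_UN_le) simp
  finally have c1: "real (card (systems_of_imprimitivity \<Omega> R)) \<le> (\<Sum>b\<in>{1..n}. real (Nb \<Omega> R x b {x}))"
    by (metis of_nat_le_iff of_nat_sum)
  define k where "k = log 2 (real n)"
  have k0: "k \<ge> 0" unfolding k_def using n1 by simp
  have xblk: "blk \<Omega> R x {x}" unfolding blk_def using x by auto
  have "(\<Sum>b\<in>{1..n}. real (Nb \<Omega> R x b {x})) \<le> (\<Sum>b\<in>{1..n}. 2 powr ((k + 1)^2 / 4))"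
  proof (rule sum_mono)
    fix b assume b: "b \<in> {1..n}"
    have "real (Nb \<Omega> R x b {x}) \<le> (2 * real n / real b) powr (log 2 (real b / real (card {x})))"
      using count_step[OF tr fin x _ _ xblk] b assms(3) by auto
    also have "\<dots> \<le> 2 powr ((k + 1)^2 / 4)" unfolding k_def using b
      by (simp add: real_bound)
    finally show "real (Nb \<Omega> R x b {x}) \<le> 2 powr ((k + 1)^2 / 4)" .
  qed
  also have "\<dots> = real n * 2 powr ((k + 1)^2 / 4)" by simp
  also have "\<dots> = 2 powr (1/4) * 2 powr (k^2/4 + 3/2 * k)"
  proof -
    have "real n = 2 powr k" unfolding k_def using n1 by simp
    moreover have "k + (k + 1)^2 / 4 = 1/4 + (k^2/4 + 3/2 * k)" by (simp add: power2_eq_square field_simps)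
    ultimately show ?thesis by (simp add: powr_add[symmetric])
  qed
  also have "\<dots> \<le> 7.3722 * 2 powr (k * (k / 4 + 1.8919))"
  proof (rule mult_mono)
    have "2 powr (1/4::real) \<le> 2 powr 1" by (rule powr_mono) auto
    then show "2 powr (1/4::real) \<le> 7.3722" by simp
    show "2 powr (k^2/4 + 3/2 * k) \<le> 2 powr (k * (k / 4 + 1.8919))"
      using k0 by (intro powr_mono) (auto simp: power2_eq_square algebra_simps)
  qed auto
  also have "\<dots> = 7.3722 * real n powr (log 2 (real n) / 4 + 1.8919)"
  proof -
    have "real n = 2 powr k" unfolding k_def using n1 by simp
    have "(2 powr k) powr (k / 4 + 1.8919) = 2 powr (k * (k / 4 + 1.8919))" by (simp add: powr_powr)
    then show ?thesis using \<open>real n = 2 powr k\<close> unfolding k_def by simp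
  qed
  finally show ?thesis using c1 by linarith
qed

end
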